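(* Let $\mathbf S$ be a specialization semilattice and let $\precsim$ and $\sim$ be the relations on $S\times S^{<\omega}$ defined in the context. Then: (i) $\precsim$ is reflexive and transitive, hence $\sim$ is an equivalence relation. (ii) The map $K[a,\{b_1,\dots,b_h\}]=[a,\{a\vee_S b_1\vee_S\cdots\vee_S b_h\}]$ is well defined on $\sim$-classes, i.e. if $(a,\{b_1,\dots,b_h\})\sim(c,\{d_1,\dots,d_k\})$ then $(a,\{a\vee_S b_1\vee_S\cdots\vee_S b_h\})\sim(c,\{c\vee_S d_1\vee_S\cdots\vee_S d_k\})$. (iii) $\sim$ is a congruence of the product semilattice $(S,\vee_S)\times(S^{<\omega},\cup)$, so the quotient $\widetilde S$ inherits a semilattice operation given by $[a,B]\vee[c,D]=[a\vee_S c,B\cup D]$; moreover, for the induced order $\le$ on $\widetilde S$, $[a,B]\le[c,D]$ holds if and only if $(a,B)\precsim(c,D)$.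
   Context: A specialization semilattice is a triple $\mathbf S=(S,\vee,\sqsubseteq)$ where $(S,\vee)$ is a join-semilattice, with induced order $a\le b$ iff $a\vee b=b$, and $\sqsubseteq$ is a binary relation on $S$ such that for all $a,b,c,a_1\in S$: (S1) $a\le b$ implies $a\sqsubseteq b$; (S2) $a\sqsubseteq b$ and $b\sqsubseteq c$ imply $a\sqsubseteq c$; (S3) $a\sqsubseteq b$ and $a_1\sqsubseteq b$ imply $a\vee a_1\sqsubseteq b$. Write $\vee_S,\le_S,\sqsubseteq_S$ for the operations/relations of $\mathbf S$. Let $S^{<\omega}$ be the set of finite subsets of $S$. On $S\times S^{<\omega}$ define $(a,B)\precsim(c,D)$, where $D=\{d_1,\dots,d_k\}$ ($k\ge 0$), to hold iff (a1) there exist $d_1^*,\dots,d_k^*\in S$ with $d_j^*\sqsubseteq_S d_j$ for each $j\le k$ and $a\le_S c\vee_S d_1^*\vee_S\cdots\vee_S d_k^*$ (when $D=\emptyset$ this means $a\le_S c$); and (a2) for every $b\in B$ there is $d\in D$ with $b\sqsubseteq_S d$. Let $(a,B)\sim(c,D)$ iff $(a,B)\precsim(c,D)$ and $(c,D)\precsim(a,B)$. $\widetilde S$ denotes the set of $\sim$-classes and $[a,B]$ the class of $(a,B)$. *)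

theory Defs
  imports Main
begin

text \<open>A specialization semilattice: the join-semilattice is the type class
  semilattice_sup (whose order satisfies a \<le> b iff sup a b = b), and
  sp is the specialization relation.\<close>

definition spec_semilattice :: "('a::semilattice_sup \<Rightarrow> 'a \<Rightarrow> bool) \<Rightarrow> bool" where
  "spec_semilattice sp \<longleftrightarrow>
     (\<forall>a b. a \<le> b \<longrightarrow> sp a b) \<and>
     (\<forall>a b c. sp a b \<longrightarrow> sp b c \<longrightarrow> sp a c) \<and>
     (\<forall>a a1 b. sp a b \<longrightarrow> sp a1 b \<longrightarrow> sp (sup a a1) b)"

definition join_with :: "'a::semilattice_sup \<Rightarrow> 'a set \<Rightarrow> 'a" where
  "join_with a B = Finite_Set.fold sup a B"

definition sprec :: "('a::semilattice_sup \<Rightarrow> 'a \<Rightarrow> bool) \<Rightarrow> 'a \<times> 'a set \<Rightarrow> 'a \<times> 'a set \<Rightarrow> bool" where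
  "sprec sp p q \<longleftrightarrow>
     (case p of (a, B) \<Rightarrow> case q of (c, D) \<Rightarrow>
       (\<exists>f. (\<forall>d\<in>D. sp (f d) d) \<and> a \<le> join_with c (f ` D)) \<and>
       (\<forall>b\<in>B. \<exists>d\<in>D. sp b d))"

definition sequiv :: "('a::semilattice_sup \<Rightarrow> 'a \<Rightarrow> bool) \<Rightarrow> 'a \<times> 'a set \<Rightarrow> 'a \<times> 'a set \<Rightarrow> bool" where
  "sequiv sp p q \<longleftrightarrow> sprec sp p q \<and> sprec sp q p"

end

theory Submission
  imports Defs
begin

lemma jw_empty[simp]: "join_with c {} = c"
  by (simp add: join_with_def)

lemma jw_insert[simp]: "finite X \<Longrightarrow> join_with c (insert x X) = sup x (join_with c X)"
  unfolding join_with_def using comp_fun_idem_on.fold_insert_idem[OF comp_fun_idem_sup[unfolded comp_fun_idem_def'], of x X] by simp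

lemma jw_lub: "finite X \<Longrightarrow> c \<le> y \<Longrightarrow> \<forall>x\<in>X. x \<le> y \<Longrightarrow> join_with c X \<le> y"
  by (induction X rule: finite_induct) auto

lemma jw_ub1: "finite X \<Longrightarrow> c \<le> join_with c X"
  by (induction X rule: finite_induct) (auto intro: le_supI2)

lemma jw_ub2: "finite X \<Longrightarrow> x \<in> X \<Longrightarrow> x \<le> join_with c X"
  by (induction X rule: finite_induct) (auto intro: le_supI2)

lemma jw_sp:
  assumes S3: "\<forall>a a1 b. sp a b \<longrightarrow> sp a1 b \<longrightarrow> sp (sup a a1) b"
  shows "finite X \<Longrightarrow> sp c y \<Longrightarrow> \<forall>x\<in>X. sp x y \<Longrightarrow> sp (join_with c X) y"
  by (induction X rule: finite_induct) (auto simp: S3)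

theorem lemma3p6:
  fixes sp :: "'a::semilattice_sup \<Rightarrow> 'a \<Rightarrow> bool"
  assumes "spec_semilattice sp"
  shows
    "(\<forall>a B. finite B \<longrightarrow> sprec sp (a, B) (a, B))
   \<and> (\<forall>a B c D e E. finite B \<longrightarrow> finite D \<longrightarrow> finite E \<longrightarrow>
        sprec sp (a, B) (c, D) \<longrightarrow> sprec sp (c, D) (e, E) \<longrightarrow> sprec sp (a, B) (e, E))
   \<and> (\<forall>a B. finite B \<longrightarrow> sequiv sp (a, B) (a, B))
   \<and> (\<forall>a B c D. finite B \<longrightarrow> finite D \<longrightarrow>
        sequiv sp (a, B) (c, D) \<longrightarrow> sequiv sp (c, D) (a, B))
   \<and> (\<forall>a B c D e E. finite B \<longrightarrow> finite D \<longrightarrow> finite E \<longrightarrow>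
        sequiv sp (a, B) (c, D) \<longrightarrow> sequiv sp (c, D) (e, E) \<longrightarrow> sequiv sp (a, B) (e, E))
   \<and> (\<forall>a B c D. finite B \<longrightarrow> finite D \<longrightarrow> sequiv sp (a, B) (c, D) \<longrightarrow>
        sequiv sp (a, {join_with a B}) (c, {join_with c D}))
   \<and> (\<forall>a B a' B' c D c' D'. finite B \<longrightarrow> finite B' \<longrightarrow> finite D \<longrightarrow> finite D' \<longrightarrow>
        sequiv sp (a, B) (a', B') \<longrightarrow> sequiv sp (c, D) (c', D') \<longrightarrow>
        sequiv sp (sup a c, B \<union> D) (sup a' c', B' \<union> D'))
   \<and> (\<forall>a B c D. finite B \<longrightarrow> finite D \<longrightarrow>
        (sequiv sp (sup a c, B \<union> D) (c, D) \<longleftrightarrow> sprec sp (a, B) (c, D)))"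
proof -
  have S1: "\<And>a b. a \<le> b \<Longrightarrow> sp a b" and S2: "\<And>a b c. sp a b \<Longrightarrow> sp b c \<Longrightarrow> sp a c"
    and S3: "\<forall>a a1 b. sp a b \<longrightarrow> sp a1 b \<longrightarrow> sp (sup a a1) b"
    using assms unfolding spec_semilattice_def by blast+
  have S3': "\<And>a a1 b. sp a b \<Longrightarrow> sp a1 b \<Longrightarrow> sp (sup a a1) b" using S3 by blast
  have JS: "\<And>X c y. finite X \<Longrightarrow> sp c y \<Longrightarrow> \<forall>x\<in>X. sp x y \<Longrightarrow> sp (join_with c X) y"
    using jw_sp[OF S3] by blast
  have refl: "sprec sp (a, B) (a, B)" if "finite B" for a B
  proof -
    have "\<forall>d\<in>B. sp (id d) d" by (simp add: S1)
    moreover have "a \<le> join_with a (id ` B)" using that by (simp add: jw_ub1)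
    ultimately show ?thesis unfolding sprec_def using S1 by (auto intro!: exI[of _ id])
  qed
  have trans: "sprec sp (a, B) (e, E)"
    if fin: "finite B" "finite D" "finite E" and h1: "sprec sp (a, B) (c, D)" and h2: "sprec sp (c, D) (e, E)"
    for a B c D e E
  proof -
    obtain f where f1: "\<forall>d\<in>D. sp (f d) d" and f2: "a \<le> join_with c (f ` D)"
      and b1: "\<forall>b\<in>B. \<exists>d\<in>D. sp b d" using h1 unfolding sprec_def by auto
    obtain g where g1: "\<forall>x\<in>E. sp (g x) x" and g2: "c \<le> join_with e (g ` E)"
      and b2: "\<forall>d\<in>D. \<exists>x\<in>E. sp d x" using h2 unfolding sprec_def by auto
    define h where "h x = join_with (g x) (f ` {d\<in>D. sp d x})" for x
    have h1': "\<forall>x\<in>E. sp (h x) x"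
    proof
      fix x assume "x \<in> E"
      show "sp (h x) x" unfolding h_def
        using \<open>x\<in>E\<close> g1 f1 fin by (intro JS) (auto intro: S2)
    qed
    have "join_with c (f ` D) \<le> join_with e (h ` E)"
    proof (rule jw_lub)
      show "finite (f ` D)" using fin by simp
      show "c \<le> join_with e (h ` E)"
      proof -
        have "join_with e (g ` E) \<le> join_with e (h ` E)"
        proof (rule jw_lub)
          show "finite (g ` E)" using fin by simp
          show "e \<le> join_with e (h ` E)" using fin by (simp add: jw_ub1)
          show "\<forall>x\<in>g ` E. x \<le> join_with e (h ` E)"
          proof
            fix y assume "y \<in> g ` E"
            then obtain x where x: "x \<in> E" "y = g x" by auto
            have "g x \<le> h x" unfolding h_def using fin by (simp add: jw_ub1)
            also have "h x \<le> join_with e (h ` E)" using x fin by (simp add: jw_ub2)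
            finally show "y \<le> join_with e (h ` E)" using x by simp
          qed
        qed
        then show ?thesis using g2 by simp
      qed
      show "\<forall>x\<in>f ` D. x \<le> join_with e (h ` E)"
      proof
        fix y assume "y \<in> f ` D"
        then obtain d where d: "d \<in> D" "y = f d" by auto
        obtain x where x: "x \<in> E" "sp d x" using b2 d by auto
        have "f d \<le> h x" unfolding h_def using fin d x by (intro jw_ub2) auto
        also have "h x \<le> join_with e (h ` E)" using x fin by (simp add: jw_ub2)
        finally show "y \<le> join_with e (h ` E)" using d by simp
      qed
    qed
    then have "a \<le> join_with e (h ` E)" using f2 by simp
    moreover have "\<forall>b\<in>B. \<exists>x\<in>E. sp b x" using b1 b2 S2 by blast
    ultimately show ?thesis using h1' unfolding sprec_def by auto
  qed
  have K: "sprec sp (a, {join_with a B}) (c, {join_with c D})"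
    if fin: "finite B" "finite D" and h1: "sprec sp (a, B) (c, D)" for a B c D
  proof -
    obtain f where f1: "\<forall>d\<in>D. sp (f d) d" and f2: "a \<le> join_with c (f ` D)"
      and b1: "\<forall>b\<in>B. \<exists>d\<in>D. sp b d" using h1 unfolding sprec_def by auto
    define c' where "c' = join_with c D"
    have dc: "\<forall>d\<in>D. d \<le> c'" unfolding c'_def using fin by (simp add: jw_ub2)
    have fc: "\<forall>d\<in>D. sp (f d) c'" using dc f1 S1 S2 by blast
    define f' where "f' = (\<lambda>_::'a. join_with c' (f ` D))"
    have "sp (f' c') c'" unfolding f'_def using fin fc by (intro JS) (auto intro: S1)
    moreover have "a \<le> join_with c (f' ` {c'})"
    proof -
      have "join_with c (f ` D) \<le> f' c'" unfolding f'_def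
        using fin by (intro jw_lub) (auto simp: c'_def jw_ub1 jw_ub2 intro: order_trans[OF jw_ub1])
      then have "join_with c (f ` D) \<le> sup (f' c') c" by (simp add: le_supI1)
      then show ?thesis using f2 by simp
    qed
    moreover have "sp (join_with a B) c'"
    proof (rule JS)
      show "finite B" by fact
      have "sp (join_with c (f ` D)) c'" using fin fc
        by (intro JS) (auto simp: c'_def jw_ub1 intro: S1)
      then show "sp a c'" using f2 S1 S2 by blast
      show "\<forall>x\<in>B. sp x c'" using b1 dc S1 S2 by blast
    qed
    ultimately show ?thesis unfolding sprec_def c'_def by auto
  qed
  have cong: "sprec sp (sup a c, B \<union> D) (sup a' c', B' \<union> D')"
    if fin: "finite B'" "finite D'" and h1: "sprec sp (a, B) (a', B')" and h2: "sprec sp (c, D) (c', D')"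
    for a B a' B' c D c' D'
  proof -
    obtain f where f1: "\<forall>d\<in>B'. sp (f d) d" and f2: "a \<le> join_with a' (f ` B')"
      and b1: "\<forall>b\<in>B. \<exists>d\<in>B'. sp b d" using h1 unfolding sprec_def by auto
    obtain g where g1: "\<forall>d\<in>D'. sp (g d) d" and g2: "c \<le> join_with c' (g ` D')"
      and b2: "\<forall>b\<in>D. \<exists>d\<in>D'. sp b d" using h2 unfolding sprec_def by auto
    define h where "h x = (if x \<in> B' \<and> x \<in> D' then sup (f x) (g x) else if x \<in> B' then f x else g x)" for x
    have hs: "\<forall>x\<in>B' \<union> D'. sp (h x) x" using f1 g1 S3' unfolding h_def by auto
    have fh: "\<forall>x\<in>B'. f x \<le> h x" and gh: "\<forall>x\<in>D'. g x \<le> h x" unfolding h_def by auto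
    let ?J = "join_with (sup a' c') (h ` (B' \<union> D'))"
    have hJ: "\<forall>x\<in>B' \<union> D'. h x \<le> ?J" using fin by (auto intro: jw_ub2)
    have a'J: "sup a' c' \<le> ?J" using fin by (intro jw_ub1) simp
    have a'J1: "a' \<le> ?J" and c'J1: "c' \<le> ?J" using a'J by auto
    have "join_with a' (f ` B') \<le> ?J"
      using fin a'J1 hJ fh by (intro jw_lub) (auto intro: order_trans)
    moreover have "join_with c' (g ` D') \<le> ?J"
      using fin c'J1 hJ gh by (intro jw_lub) (auto intro: order_trans)
    ultimately have "sup a c \<le> ?J" using f2 g2 by (meson le_sup_iff order_trans)
    moreover have "\<forall>b\<in>B \<union> D. \<exists>d\<in>B' \<union> D'. sp b d" using b1 b2 by blast
    ultimately show ?thesis using hs unfolding sprec_def by auto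
  qed
  have ord: "sequiv sp (sup a c, B \<union> D) (c, D) \<longleftrightarrow> sprec sp (a, B) (c, D)"
    if fin: "finite B" "finite D" for a B c D
  proof
    assume "sequiv sp (sup a c, B \<union> D) (c, D)"
    then obtain f where f1: "\<forall>d\<in>D. sp (f d) d" and f2: "sup a c \<le> join_with c (f ` D)"
      and b1: "\<forall>b\<in>B \<union> D. \<exists>d\<in>D. sp b d" unfolding sequiv_def sprec_def by auto
    show "sprec sp (a, B) (c, D)" unfolding sprec_def using f1 f2 b1 by auto
  next
    assume h: "sprec sp (a, B) (c, D)"
    then obtain f where f1: "\<forall>d\<in>D. sp (f d) d" and f2: "a \<le> join_with c (f ` D)"
      and b1: "\<forall>b\<in>B. \<exists>d\<in>D. sp b d" unfolding sprec_def by auto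
    have "sup a c \<le> join_with c (f ` D)" using f2 fin by (simp add: jw_ub1)
    moreover have "\<forall>b\<in>B \<union> D. \<exists>d\<in>D. sp b d" using b1 S1 by blast
    ultimately have 1: "sprec sp (sup a c, B \<union> D) (c, D)" using f1 unfolding sprec_def by auto
    have "\<forall>d\<in>B \<union> D. sp (id d) d" using S1 by auto
    moreover have "c \<le> join_with (sup a c) (id ` (B \<union> D))"
      using fin by (meson finite_UnI finite_imageI jw_ub1 le_supE)
    moreover have "\<forall>b\<in>D. \<exists>d\<in>B \<union> D. sp b d" using S1 by blast
    ultimately have 2: "sprec sp (c, D) (sup a c, B \<union> D)" unfolding sprec_def by blast
    show "sequiv sp (sup a c, B \<union> D) (c, D)" using 1 2 unfolding sequiv_def by simp
  qed
  have c1: "\<forall>a B. finite B \<longrightarrow> sprec sp (a, B) (a, B)" using refl by blast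
  have c2: "\<forall>a B c D e E. finite B \<longrightarrow> finite D \<longrightarrow> finite E \<longrightarrow>
        sprec sp (a, B) (c, D) \<longrightarrow> sprec sp (c, D) (e, E) \<longrightarrow> sprec sp (a, B) (e, E)"
    using trans by blast
  have c3: "\<forall>a B. finite B \<longrightarrow> sequiv sp (a, B) (a, B)" using refl unfolding sequiv_def by blast
  have c4: "\<forall>a B c D. finite B \<longrightarrow> finite D \<longrightarrow>
        sequiv sp (a, B) (c, D) \<longrightarrow> sequiv sp (c, D) (a, B)" unfolding sequiv_def by blast
  have c5: "\<forall>a B c D e E. finite B \<longrightarrow> finite D \<longrightarrow> finite E \<longrightarrow>
        sequiv sp (a, B) (c, D) \<longrightarrow> sequiv sp (c, D) (e, E) \<longrightarrow> sequiv sp (a, B) (e, E)"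
  proof (intro allI impI)
    fix a B c D e E
    assume "finite B" "finite D" "finite E" "sequiv sp (a, B) (c, D)" "sequiv sp (c, D) (e, E)"
    then show "sequiv sp (a, B) (e, E)" unfolding sequiv_def using trans by metis
  qed
  have c6: "\<forall>a B c D. finite B \<longrightarrow> finite D \<longrightarrow> sequiv sp (a, B) (c, D) \<longrightarrow>
        sequiv sp (a, {join_with a B}) (c, {join_with c D})"
    unfolding sequiv_def using K by blast
  have c7: "\<forall>a B a' B' c D c' D'. finite B \<longrightarrow> finite B' \<longrightarrow> finite D \<longrightarrow> finite D' \<longrightarrow>
        sequiv sp (a, B) (a', B') \<longrightarrow> sequiv sp (c, D) (c', D') \<longrightarrow>
        sequiv sp (sup a c, B \<union> D) (sup a' c', B' \<union> D')"
  proof (intro allI impI)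
    fix a B a' B' c D c' D'
    assume "finite B" "finite B'" "finite D" "finite D'"
      "sequiv sp (a, B) (a', B')" "sequiv sp (c, D) (c', D')"
    then show "sequiv sp (sup a c, B \<union> D) (sup a' c', B' \<union> D')"
      unfolding sequiv_def using cong by metis
  qed
  have c8: "\<forall>a B c D. finite B \<longrightarrow> finite D \<longrightarrow>
        (sequiv sp (sup a c, B \<union> D) (c, D) \<longleftrightarrow> sprec sp (a, B) (c, D))"
    using ord by blast
  show ?thesis using c1 c2 c3 c4 c5 c6 c7 c8 by (intro conjI)
qed

end
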